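(* Let $\alpha\in[0,1]$ or $\alpha\in[2,3]$, and let $2+2\alpha<p<2(2+\alpha)$. If $$\begin{aligned}&\frac{1}{2p-4\alpha-4}-\frac{1}{(2p-4\alpha-4)^2}\frac{1}{B\left(\frac{2+\alpha}{p},2p-4\alpha-4\right)}-\alpha\left(\frac{1}{2p-4\alpha}-\frac{1}{(2p-4\alpha)^2}\frac{1}{B\left(\frac{2+\alpha}{p},2p-4\alpha\right)}\right)\\&+\frac{\alpha(\alpha-1)}{2}\left(\frac{1}{2p-4\alpha+4}-\frac{1}{(2p-4\alpha+4)^2}\frac{1}{B\left(\frac{2+\alpha}{p},2p-4\alpha+4\right)}\right)-\frac{1}{4(\alpha+1)}\le0,\end{aligned}$$ then $$\int_0^1 I_t\left(\frac{2+\alpha}{p},1-\frac{2+\alpha}{p}\right)t^{2p-4\alpha-5}(1-t^4)^\alpha\,dt-\frac{1}{4(\alpha+1)}\le0.$$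
   Context: $B(x,y)=\int_0^1 u^{x-1}(1-u)^{y-1}du$ is the Beta function, $B_t(x,y)=\int_0^t u^{x-1}(1-u)^{y-1}du$ the incomplete Beta function, and $I_t(x,y)=B_t(x,y)/B(x,y)$ the regularized incomplete Beta function. *)

theory Defs
  imports "HOL-Analysis.Analysis"
begin

definition betaB :: "real \<Rightarrow> real \<Rightarrow> real" where
  "betaB x y = integral {0..1} (\<lambda>u. u powr (x - 1) * (1 - u) powr (y - 1))"

definition betaInc :: "real \<Rightarrow> real \<Rightarrow> real \<Rightarrow> real" where
  "betaInc t x y = integral {0..t} (\<lambda>u. u powr (x - 1) * (1 - u) powr (y - 1))"

definition betaReg :: "real \<Rightarrow> real \<Rightarrow> real \<Rightarrow> real" where
  "betaReg t x y = betaInc t x y / betaB x y"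

end

theory Submission
  imports Defs
begin

lemma deriv_indef:
  fixes g :: "real \<Rightarrow> real"
  assumes gi: "g integrable_on {0..1}" and gc: "continuous_on {0<..<1} g" and x: "x \<in> {0<..<1}"
  shows "((\<lambda>t. integral {0..t} g) has_real_derivative g x) (at x)"
proof -
  define c where "c = x/2"
  define d where "d = (x+1)/2"
  have cd: "0 < c" "c < x" "x < d" "d < 1" using x by (auto simp: c_def d_def)
  have gcd: "continuous_on {c..d} g" by (rule continuous_on_subset[OF gc]) (use cd in auto)
  have "((\<lambda>t. integral {c..t} g) has_real_derivative g x) (at x within {c..d})"
    by (rule integral_has_real_derivative[OF gcd]) (use cd in auto)
  moreover have "x \<in> interior {c..d}" using cd by auto
  ultimately have D: "((\<lambda>t. integral {c..t} g) has_real_derivative g x) (at x)"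
    using at_within_interior by metis
  have D2: "((\<lambda>t. integral {0..c} g + integral {c..t} g) has_real_derivative g x) (at x)"
    using DERIV_add[OF DERIV_const D] by simp
  show ?thesis
  proof (rule has_field_derivative_transform_within_open[OF D2, of "{c<..<d}"])
    fix t assume t: "t \<in> {c<..<d}"
    have gt: "g integrable_on {0..t}" by (rule integrable_on_subinterval[OF gi]) (use t cd in auto)
    then show "integral {0..c} g + integral {c..t} g = integral {0..t} g"
      using Henstock_Kurzweil_Integration.integral_combine[OF _ _ gt, of c] t cd by auto
  qed (use cd in auto)
qed

lemma E_lemma:
  fixes a b s :: real
  assumes a: "a > 0" and b: "b > 0" and s: "s > 0"
  shows "((\<lambda>t. integral {0..t} (\<lambda>u. u powr (a-1) * (1-u) powr (b-1)) * t powr (s-1))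
           has_integral (Beta a b - Beta (a+s) b)/s) {0..1}"
proof -
  define f where "f = (\<lambda>u::real. u powr (a-1) * (1-u) powr (b-1))"
  define fs where "fs = (\<lambda>u::real. f u * u powr s)"
  define G where "G t = integral {0..t} f" for t
  define K where "K t = integral {0..t} fs" for t
  define H where "H t = (G t * t powr s - K t)/s" for t
  have hf: "(f has_integral Beta a b) {0..1}" unfolding f_def by (rule has_integral_Beta_real[OF a b])
  have hfs: "(fs has_integral Beta (a+s) b) {0..1}"
  proof -
    have "((\<lambda>u. u powr (a+s-1) * (1-u) powr (b-1)) has_integral Beta (a+s) b) {0..1}"
      using has_integral_Beta_real[of "a+s" b] a b s by simp
    moreover have "fs u = u powr (a+s-1) * (1-u) powr (b-1)" if "u \<in> {0..1}" for u
    proof (cases "u = 0")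
      case False
      then have "u > 0" using that by auto
      then show ?thesis unfolding fs_def f_def
        by (simp add: powr_add[symmetric] algebra_simps)
    qed (simp add: fs_def f_def)
    ultimately show ?thesis using has_integral_cong by (metis (no_types, lifting))
  qed
  have fi: "f integrable_on {0..1}" using hf by blast
  have fsi: "fs integrable_on {0..1}" using hfs by blast
  have fc: "continuous_on {0<..<1} f" unfolding f_def
    by (intro continuous_intros) auto
  have fsc: "continuous_on {0<..<1} fs" unfolding fs_def
    by (intro continuous_intros fc) auto
  have Gc: "continuous_on {0..1} G" unfolding G_def by (rule indefinite_integral_continuous_1[OF fi])
  have Kc: "continuous_on {0..1} K" unfolding K_def by (rule indefinite_integral_continuous_1[OF fsi])
  have Hc: "continuous_on {0..1} H" unfolding H_def
    by (intro continuous_intros continuous_on_powr' Gc Kc) (use s in auto)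
  have HD: "(H has_vector_derivative G x * x powr (s-1)) (at x)" if x: "x \<in> {0<..<1}" for x
  proof -
    have dG: "(G has_real_derivative f x) (at x)" unfolding G_def by (rule deriv_indef[OF fi fc x])
    have dK: "(K has_real_derivative fs x) (at x)" unfolding K_def by (rule deriv_indef[OF fsi fsc x])
    have "(H has_real_derivative (f x * x powr s + G x * (s * x powr (s-1)) - fs x)/s) (at x)"
      unfolding H_def using x s
      by (auto intro!: derivative_eq_intros dG dK)
    moreover have "(f x * x powr s + G x * (s * x powr (s-1)) - fs x)/s = G x * x powr (s-1)"
      using s by (simp add: fs_def)
    ultimately show ?thesis by (simp add: has_real_derivative_iff_has_vector_derivative)
  qed
  have "((\<lambda>x. G x * x powr (s-1)) has_integral (H 1 - H 0)) {0..1}"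
    by (rule fundamental_theorem_of_calculus_interior[OF _ Hc HD]) auto
  moreover have "H 0 = 0" by (simp add: H_def G_def K_def)
  moreover have "H 1 = (Beta a b - Beta (a+s) b)/s"
    using integral_unique[OF hf] integral_unique[OF hfs] by (simp add: H_def G_def K_def)
  ultimately show ?thesis by (simp add: G_def f_def)
qed

lemma Beta_ident:
  fixes a s :: real
  assumes a: "0 < a" "a < 1" and s: "s > 0"
  shows "Beta (a+s) (1-a) * Beta a s * s = Beta a (1-a)"
proof -
  have g1: "Gamma (a+s) > 0" "Gamma s > 0" "Gamma a > 0" "Gamma (1-a) > 0"
    using a s by (auto intro!: Gamma_real_pos)
  have e1: "a + s + (1 - a) = s + 1" "a + (1 - a) = 1" by auto
  have "s \<notin> \<int>\<^sub>\<le>\<^sub>0" using s by (auto elim!: nonpos_Ints_cases)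
  then have g2: "Gamma (s+1) = s * Gamma s" by (rule Gamma_plus1)
  have "Gamma s \<noteq> 0" "Gamma (a+s) \<noteq> 0" using g1 by auto
  then show ?thesis unfolding Beta_def e1 g2 using s by (simp add: field_simps)
qed

lemma binom_ineq:
  fixes \<alpha> x :: real
  assumes halpha: "(0 \<le> \<alpha> \<and> \<alpha> \<le> 1) \<or> (2 \<le> \<alpha> \<and> \<alpha> \<le> 3)" and x: "0 \<le> x" "x \<le> 1"
  shows "(1-x) powr \<alpha> \<le> 1 - \<alpha>*x + \<alpha>*(\<alpha>-1)/2 * x^2"
proof -
  have c3: "\<alpha>*(\<alpha>-1)*(\<alpha>-2) \<ge> 0"
  proof (cases "\<alpha> \<le> 1")
    case True
    then have "\<alpha> \<ge> 0" using halpha by auto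
    have "(\<alpha>-1)*(\<alpha>-2) \<ge> 0" using True by (intro mult_nonpos_nonpos) auto
    then show ?thesis using \<open>\<alpha> \<ge> 0\<close> by (simp add: mult.assoc)
  next
    case False
    then have "\<alpha> \<ge> 2" using halpha by auto
    then show ?thesis by simp
  qed
  consider "x = 0" | "x = 1" | "0 < x \<and> x < 1" using x by linarith
  then show ?thesis
  proof cases
    case 1 then show ?thesis by simp
  next
    case 2
    have "0 \<le> (\<alpha>-1)*(\<alpha>-2)"
      using halpha by (auto intro: mult_nonpos_nonpos mult_nonneg_nonneg)
    moreover have "1 - \<alpha>*x + \<alpha>*(\<alpha>-1)/2 * x^2 = (\<alpha>-1)*(\<alpha>-2)/2"
      using 2 by (simp add: field_simps power2_eq_square)
    ultimately show ?thesis using 2 by simp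
  next
    case 3
    define D where "D m t = (-1)^m * (\<Prod>i<m. (\<alpha> - real i)) * (1-t) powr (\<alpha> - real m)" for m t
    have DD: "(D m has_real_derivative D (Suc m) t) (at t)" if "t \<le> x" for m t
    proof -
      have t1: "1 - t > 0" using that 3 by auto
      have "(D m has_real_derivative (-1)^m * (\<Prod>i<m. (\<alpha> - real i)) * ((\<alpha> - real m) * (1-t) powr (\<alpha> - real m - 1) * (-1))) (at t)"
        unfolding D_def using t1 by (auto intro!: derivative_eq_intros)
      moreover have "(-1)^m * (\<Prod>i<m. (\<alpha> - real i)) * ((\<alpha> - real m) * (1-t) powr (\<alpha> - real m - 1) * (-1)) = D (Suc m) t"
        unfolding D_def by (simp add: algebra_simps)
      ultimately show ?thesis by simp
    qed
    obtain t where t: "0 < t" "t < x"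
      and eq: "(1-x) powr \<alpha> = (\<Sum>m<3. D m 0 / fact m * x ^ m) + D 3 t / fact 3 * x ^ 3"
    proof -
      have D0: "D 0 = (\<lambda>x. (1-x) powr \<alpha>)" by (auto simp: D_def fun_eq_iff)
      have "\<forall>m t. m < 3 \<and> 0 \<le> t \<and> t \<le> x \<longrightarrow> DERIV (D m) t :> D (Suc m) t" using DD by blast
      from Maclaurin[OF _ _ D0 this] 3 show ?thesis using that by auto
    qed
    have "(\<Sum>m<3. D m 0 / fact m * x ^ m) = 1 - \<alpha>*x + \<alpha>*(\<alpha>-1)/2 * x^2"
      by (simp add: D_def numeral_3_eq_3 lessThan_Suc algebra_simps power2_eq_square)
    moreover have "D 3 t / fact 3 * x ^ 3 \<le> 0"
    proof -
      have "D 3 t = - (\<alpha>*(\<alpha>-1)*(\<alpha>-2)) * (1-t) powr (\<alpha> - 3)"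
        by (simp add: D_def numeral_3_eq_3 lessThan_Suc algebra_simps)
      moreover have "(1-t) powr (\<alpha> - 3) \<ge> 0" by simp
      ultimately have "D 3 t \<le> 0" using c3 by (simp add: mult_nonneg_nonneg)
      then show ?thesis using 3 by (simp add: mult_nonpos_nonneg divide_nonpos_pos)
    qed
    ultimately show ?thesis using eq by linarith
  qed
qed

theorem lemma4p1:
  fixes \<alpha> p :: real
  assumes halpha: "(0 \<le> \<alpha> \<and> \<alpha> \<le> 1) \<or> (2 \<le> \<alpha> \<and> \<alpha> \<le> 3)"
    and hp1: "2 + 2 * \<alpha> < p" and hp2: "p < 2 * (2 + \<alpha>)"
    and hcond:
      "1 / (2*p - 4*\<alpha> - 4) - 1 / (2*p - 4*\<alpha> - 4)^2 / betaB ((2 + \<alpha>) / p) (2*p - 4*\<alpha> - 4)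
       - \<alpha> * (1 / (2*p - 4*\<alpha>) - 1 / (2*p - 4*\<alpha>)^2 / betaB ((2 + \<alpha>) / p) (2*p - 4*\<alpha>))
       + \<alpha> * (\<alpha> - 1) / 2 * (1 / (2*p - 4*\<alpha> + 4)
            - 1 / (2*p - 4*\<alpha> + 4)^2 / betaB ((2 + \<alpha>) / p) (2*p - 4*\<alpha> + 4))
       - 1 / (4 * (\<alpha> + 1)) \<le> 0"
  shows "integral {0..1} (\<lambda>t. betaReg t ((2 + \<alpha>) / p) (1 - (2 + \<alpha>) / p)
            * t powr (2*p - 4*\<alpha> - 5) * (1 - t^4) powr \<alpha>) - 1 / (4 * (\<alpha> + 1)) \<le> 0"
proof -
  define a where "a = (2 + \<alpha>) / p"
  define s1 where "s1 = 2*p - 4*\<alpha> - 4"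
  define s2 where "s2 = 2*p - 4*\<alpha>"
  define s3 where "s3 = 2*p - 4*\<alpha> + 4"
  have al0: "\<alpha> \<ge> 0" using halpha by auto
  have p0: "p > 0" using hp1 al0 by linarith
  have a0: "0 < a" "a < 1" unfolding a_def using p0 al0 hp1 by (auto simp: field_simps)
  have s0: "s1 > 0" "s2 > 0" "s3 > 0" unfolding s1_def s2_def s3_def using hp1 by auto
  define f where "f = (\<lambda>u::real. u powr (a-1) * (1-u) powr ((1-a)-1))"
  define Bc where "Bc = Beta a (1-a)"
  have hf: "(f has_integral Bc) {0..1}" unfolding f_def Bc_def
    by (rule has_integral_Beta_real) (use a0 in auto)
  have Bc0: "Bc > 0" unfolding Bc_def Beta_def using a0 by (auto intro!: Gamma_real_pos divide_pos_pos mult_pos_pos)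
  have betaB_eq: "betaB a s = Beta a s" if "s > 0" for s
    unfolding betaB_def using has_integral_Beta_real[of a s] a0 that integral_unique by blast
  have bR: "betaReg t a (1-a) = integral {0..t} f / Bc" for t
    unfolding betaReg_def betaInc_def f_def using integral_unique[OF hf] by (simp add: betaB_def f_def)
  define R where "R s = 1/s - 1/s^2 / betaB a s" for s
  have hR: "((\<lambda>t. betaReg t a (1-a) * t powr (s-1)) has_integral R s) {0..1}" if s: "s > 0" for s
  proof -
    have "((\<lambda>t. integral {0..t} f * t powr (s-1)) has_integral (Bc - Beta (a+s) (1-a))/s) {0..1}"
      unfolding f_def Bc_def by (rule E_lemma) (use a0 s in auto)
    from has_integral_mult_left[OF this, of "1/Bc"]
    have "((\<lambda>t. betaReg t a (1-a) * t powr (s-1)) has_integral ((Bc - Beta (a+s) (1-a))/s * (1/Bc))) {0..1}"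
      by (simp add: bR)
    moreover have "(Bc - Beta (a+s) (1-a))/s * (1/Bc) = R s"
    proof -
      have bs: "Beta a s > 0" unfolding Beta_def using a0 s by (auto intro!: Gamma_real_pos divide_pos_pos mult_pos_pos)
      have "Beta (a+s) (1-a) = Bc / (Beta a s * s)"
        using Beta_ident[of a s] a0 s bs unfolding Bc_def by (simp add: field_simps)
      then show ?thesis unfolding R_def betaB_eq[OF s] using bs s Bc0
        by (simp add: field_simps power2_eq_square)
    qed
    ultimately show ?thesis by simp
  qed
  define L where "L t = betaReg t a (1-a) * t powr (s1 - 1) * (1 - t^4) powr \<alpha>" for t
  define U where "U t = betaReg t a (1-a) * t powr (s1 - 1) - \<alpha> * (betaReg t a (1-a) * t powr (s2 - 1))
     + \<alpha> * (\<alpha> - 1) / 2 * (betaReg t a (1-a) * t powr (s3 - 1))" for t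
  have hU: "(U has_integral (R s1 - \<alpha> * R s2 + \<alpha> * (\<alpha> - 1) / 2 * R s3)) {0..1}"
    unfolding U_def
    by (intro has_integral_add has_integral_diff has_integral_mult_right hR s0)
  have rnn: "betaReg t a (1-a) \<ge> 0" if "t \<in> {0..1}" for t
  proof -
    have fi: "f integrable_on {0..1}" using hf by blast
    have "f integrable_on {0..t}" by (rule integrable_on_subinterval[OF fi]) (use that in auto)
    moreover have "f x \<ge> 0" for x unfolding f_def by simp
    ultimately show ?thesis unfolding bR using Bc0 by (auto intro!: integral_nonneg divide_nonneg_pos)
  qed
  have LU: "L t \<le> U t" if t: "t \<in> {0..1}" for t
  proof (cases "t = 0")
    case True then show ?thesis by (simp add: L_def U_def)
  next
    case False
    then have tp: "t > 0" using t by auto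
    have ex: "s2 - 1 = (s1 - 1) + 4" "s3 - 1 = (s1 - 1) + 8" unfolding s1_def s2_def s3_def by auto
    have p4: "t powr 4 = t^4" "t powr 8 = (t^4)^2" using tp by (simp_all add: power_mult[symmetric])
    have e2: "t powr (s2 - 1) = t powr (s1 - 1) * t^4"
      unfolding ex(1) powr_add p4 by (rule refl)
    have e3: "t powr (s3 - 1) = t powr (s1 - 1) * (t^4)^2"
      unfolding ex(2) powr_add p4 by (rule refl)
    have "(1 - t^4) powr \<alpha> \<le> 1 - \<alpha>*t^4 + \<alpha>*(\<alpha>-1)/2 * (t^4)^2"
      by (rule binom_ineq[OF halpha]) (use t in \<open>auto simp: power_le_one\<close>)
    moreover have "betaReg t a (1-a) * t powr (s1 - 1) \<ge> 0" using rnn[OF t] by simp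
    ultimately have "L t \<le> betaReg t a (1-a) * t powr (s1 - 1) * (1 - \<alpha>*t^4 + \<alpha>*(\<alpha>-1)/2 * (t^4)^2)"
      unfolding L_def by (rule mult_left_mono)
    also have "\<dots> = U t" unfolding U_def e2 e3 by (simp add: algebra_simps)
    finally show ?thesis .
  qed
  have Lnn: "L t \<ge> 0" if "t \<in> {0..1}" for t unfolding L_def using rnn[OF that] by simp
  have Lc: "continuous_on {0<..<1} L"
  proof -
    have "continuous_on {0..1} (\<lambda>t. integral {0..t} f)"
      using hf by (intro indefinite_integral_continuous_1) blast
    then have "continuous_on {0<..<1} (\<lambda>t. integral {0..t} f)"
      by (rule continuous_on_subset) auto
    moreover have "x^4 < 1" if "0 < x" "x < 1" for x :: real
      using that by (simp add: power_less_one_iff)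
    ultimately show ?thesis unfolding L_def bR using Bc0
      by (intro continuous_intros) fastforce+
  qed
  have "L integrable_on {0<..<1}"
  proof (rule measurable_bounded_by_integrable_imp_integrable_real)
    show "L \<in> borel_measurable (lebesgue_on {0<..<1})"
      by (rule continuous_imp_measurable_on_sets_lebesgue[OF Lc]) auto
    show "U integrable_on {0<..<1}" using hU integrable_on_Icc_iff_Ioo by blast
    show "\<bar>L x\<bar> \<le> U x" if "x \<in> {0<..<1}" for x using LU[of x] Lnn[of x] that by auto
  qed auto
  then have Li: "L integrable_on {0..1}" by (simp add: integrable_on_Icc_iff_Ioo)
  have "integral {0..1} L \<le> integral {0..1} U"
    by (rule integral_le[OF Li]) (use hU LU in auto)
  also have "\<dots> = R s1 - \<alpha> * R s2 + \<alpha> * (\<alpha> - 1) / 2 * R s3" using hU by (rule integral_unique)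
  finally have main: "integral {0..1} L \<le> R s1 - \<alpha> * R s2 + \<alpha> * (\<alpha> - 1) / 2 * R s3" .
  have "(\<lambda>t. betaReg t ((2 + \<alpha>) / p) (1 - (2 + \<alpha>) / p) * t powr (2*p - 4*\<alpha> - 5) * (1 - t^4) powr \<alpha>) = L"
    unfolding L_def a_def s1_def by (auto simp: fun_eq_iff algebra_simps)
  moreover have "R s1 - \<alpha> * R s2 + \<alpha> * (\<alpha> - 1) / 2 * R s3 - 1 / (4 * (\<alpha> + 1)) \<le> 0"
    using hcond unfolding R_def s1_def s2_def s3_def a_def .
  ultimately show ?thesis using main by simp
qed

end
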